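(* Let $\mathbf a=\{a_k\}_{k\ge0}$ with $\operatorname{Im}a_k>0$ have no limit points on the real axis $\mathbb R$, satisfy $\lim_{n\to\infty}\sigma_n=+\infty$, and satisfy $\varsigma_n/\sigma_n\le C$ for all $n\ge1$ with a constant $C$. Then for every $\varphi\in L_1(0,\infty)$ and every $x\in\mathbb R$, $$\lim_{n\to\infty}\int_0^\infty\varphi(y)\sin\big(y\,\mu_n(y;x)\big)\,dy=0\quad\text{and}\quad\lim_{n\to\infty}\int_0^\infty\varphi(y)\sin\big(y\,\mu_n(-y;x)\big)\,dy=0.$$
   Context: For $y\ne0$, $x\in\mathbb R$: $\mu_n(y;x):=\frac1y\int_x^{x+y}\sum_{k=0}^{n-1}\frac{2\operatorname{Im}a_k}{(u-\operatorname{Re}a_k)^2+(\operatorname{Im}a_k)^2}\,du$. $\sigma_n:=\sum_{k=0}^{n-1}\frac{|\operatorname{Im}a_k|}{1+|a_k|^2}$, $\varsigma_n:=\sum_{k=0}^{n-1}\frac{1}{(\operatorname{Im}a_k)^2}$. "No limit points on $\mathbb R$" means no subsequence of $\{a_k\}$ converges to a real number. *)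

theory Defs
  imports "HOL-Analysis.Analysis"
begin

definition mu_seq :: "(nat \<Rightarrow> complex) \<Rightarrow> nat \<Rightarrow> real \<Rightarrow> real \<Rightarrow> real" where
  "mu_seq a n y x = (1 / y) * (LBINT u=x..x+y.
      (\<Sum>k<n. 2 * Im (a k) / ((u - Re (a k))\<^sup>2 + (Im (a k))\<^sup>2)))"

definition sigma_seq :: "(nat \<Rightarrow> complex) \<Rightarrow> nat \<Rightarrow> real" where
  "sigma_seq a n = (\<Sum>k<n. \<bar>Im (a k)\<bar> / (1 + (cmod (a k))\<^sup>2))"

definition varsigma_seq :: "(nat \<Rightarrow> complex) \<Rightarrow> nat \<Rightarrow> real" where
  "varsigma_seq a n = (\<Sum>k<n. 1 / (Im (a k))\<^sup>2)"

definition no_real_limit_points :: "(nat \<Rightarrow> complex) \<Rightarrow> bool" where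
  "no_real_limit_points a \<longleftrightarrow>
     \<not> (\<exists>r :: nat \<Rightarrow> nat. \<exists>t :: real. strict_mono r \<and> (a \<circ> r) \<longlonglongrightarrow> complex_of_real t)"

end

theory Submission imports Defs begin
context
  fixes \<psi> :: "nat \<Rightarrow> real \<Rightarrow> real"
  assumes psi_meas[measurable]: "\<And>n. \<psi> n \<in> borel_measurable borel"
    and psi_bnd: "\<And>n y. \<bar>\<psi> n y\<bar> \<le> 1"
    and psi_int: "\<And>c d. (\<lambda>n. LINT y|lborel. indicator {c..d} y * \<psi> n y) \<longlonglongrightarrow> 0"
begin

lemma aux_abs: "\<bar>b\<bar> < r/2 \<Longrightarrow> \<bar>a - b\<bar> < r/2 \<Longrightarrow> \<bar>a\<bar> < (r::real)"
  by arith

definition QQ :: "(real \<Rightarrow> real) \<Rightarrow> bool" where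
  "QQ F \<longleftrightarrow> (\<lambda>n. LINT y|lborel. F y * \<psi> n y) \<longlonglongrightarrow> 0"

lemma int_mult:
  assumes "integrable lborel F"
  shows "integrable lborel (\<lambda>y. F y * \<psi> n y)"
proof (rule Bochner_Integration.integrable_bound[OF assms])
  show "(\<lambda>y. F y * \<psi> n y) \<in> borel_measurable lborel"
    using assms by measurable
  show "AE x in lborel. norm (F x * \<psi> n x) \<le> norm (F x)"
    using psi_bnd[of n] by (auto intro!: AE_I2 mult_left_le simp: abs_mult)
qed

lemma int_diff_bound:
  assumes "integrable lborel F" "integrable lborel G"
  shows "\<bar>(LINT y|lborel. F y * \<psi> n y) - (LINT y|lborel. G y * \<psi> n y)\<bar>
          \<le> (LINT y|lborel. \<bar>F y - G y\<bar>)"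
proof -
  have "(LINT y|lborel. F y * \<psi> n y) - (LINT y|lborel. G y * \<psi> n y)
      = (LINT y|lborel. (F y - G y) * \<psi> n y)"
    using int_mult[OF assms(1)] int_mult[OF assms(2)]
    by (simp add: left_diff_distrib)
  also have "\<bar>\<dots>\<bar> \<le> (LINT y|lborel. \<bar>(F y - G y) * \<psi> n y\<bar>)"
    by (rule integral_abs_bound)
  also have "\<dots> \<le> (LINT y|lborel. \<bar>F y - G y\<bar>)"
  proof (rule integral_mono)
    show "integrable lborel (\<lambda>y. \<bar>(F y - G y) * \<psi> n y\<bar>)"
      using int_mult[of "\<lambda>y. F y - G y"] assms by auto
    show "integrable lborel (\<lambda>y. \<bar>F y - G y\<bar>)" using assms by auto
    show "\<bar>(F y - G y) * \<psi> n y\<bar> \<le> \<bar>F y - G y\<bar>" for y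
      using psi_bnd[of n y] by (auto simp: abs_mult intro: mult_left_le)
  qed
  finally show ?thesis .
qed

lemma QQ_approx:
  assumes F: "integrable lborel F"
    and app: "\<And>e. e > 0 \<Longrightarrow> \<exists>G. integrable lborel G \<and> QQ G \<and> (LINT y|lborel. \<bar>F y - G y\<bar>) < e"
  shows "QQ F"
  unfolding QQ_def LIMSEQ_iff
proof (intro allI impI)
  fix r :: real assume r: "r > 0"
  obtain G where G: "integrable lborel G" "QQ G" "(LINT y|lborel. \<bar>F y - G y\<bar>) < r/2"
    using app[of "r/2"] r by auto
  from G(2) obtain N where N: "\<forall>n\<ge>N. norm ((LINT y|lborel. G y * \<psi> n y) - 0) < r/2"
    unfolding QQ_def LIMSEQ_iff using r by (meson half_gt_zero)
  show "\<exists>no. \<forall>n\<ge>no. norm ((LINT y|lborel. F y * \<psi> n y) - 0) < r"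
  proof (intro exI allI impI)
    fix n assume "n \<ge> N"
    with N have "\<bar>LINT y|lborel. G y * \<psi> n y\<bar> < r/2" by auto
    moreover have "\<bar>(LINT y|lborel. F y * \<psi> n y) - (LINT y|lborel. G y * \<psi> n y)\<bar> < r/2"
      using int_diff_bound[OF F G(1), of n] G(3) by linarith
    ultimately show "norm ((LINT y|lborel. F y * \<psi> n y) - 0) < r"
      unfolding real_norm_def diff_zero by (rule aux_abs)
  qed
qed

lemma QQ_lim:
  assumes F: "integrable lborel F" and G: "\<And>i. integrable lborel (G i)" "\<And>i. QQ (G i)"
    and L: "(\<lambda>i. LINT y|lborel. \<bar>F y - G i y\<bar>) \<longlonglongrightarrow> 0"
  shows "QQ F"
proof (rule QQ_approx[OF F])
  fix e :: real assume "e > 0"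
  then obtain i where "norm ((LINT y|lborel. \<bar>F y - G i y\<bar>) - 0) < e"
    using L unfolding LIMSEQ_iff by blast
  then show "\<exists>G. integrable lborel G \<and> QQ G \<and> (LINT y|lborel. \<bar>F y - G y\<bar>) < e"
    using G by (intro exI[of _ "G i"]) auto
qed

lemma L1_dom:
  fixes F :: "real \<Rightarrow> real"
  assumes [measurable]: "F \<in> borel_measurable borel" "\<And>i. G i \<in> borel_measurable borel"
    and w: "integrable lborel w"
    and conv: "\<And>y. (\<lambda>i. G i y) \<longlonglongrightarrow> F y"
    and dom: "\<And>i y. \<bar>F y - G i y\<bar> \<le> w y"
  shows "(\<lambda>i. LINT y|lborel. \<bar>F y - G i y\<bar>) \<longlonglongrightarrow> 0"
proof -
  have "(\<lambda>i. LINT y|lborel. \<bar>F y - G i y\<bar>) \<longlonglongrightarrow> integral\<^sup>L (lborel::real measure) (\<lambda>y. 0::real)"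
  proof (rule integral_dominated_convergence[where s="\<lambda>i y. \<bar>F y - G i y\<bar>" and f="\<lambda>y. 0::real", OF _ _ w])
    show "AE x in lborel. (\<lambda>i. \<bar>F x - G i x\<bar>) \<longlonglongrightarrow> 0"
    proof
      fix x
      have "(\<lambda>i. \<bar>F x - G i x\<bar>) \<longlonglongrightarrow> \<bar>F x - F x\<bar>"
        by (intro tendsto_intros conv)
      then show "(\<lambda>i. \<bar>F x - G i x\<bar>) \<longlonglongrightarrow> 0" by simp
    qed
    show "AE x in lborel. norm \<bar>F x - G i x\<bar> \<le> w x" for i using dom by auto
  qed auto
  then show ?thesis by simp
qed

lemma QQ_add:
  assumes "integrable lborel F" "integrable lborel G" "QQ F" "QQ G"
  shows "QQ (\<lambda>y. F y + G y)"
proof -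
  have "(\<lambda>n. (LINT y|lborel. F y * \<psi> n y) + (LINT y|lborel. G y * \<psi> n y)) \<longlonglongrightarrow> 0 + 0"
    using assms(3,4) unfolding QQ_def by (intro tendsto_add)
  then show ?thesis unfolding QQ_def
    using int_mult[OF assms(1)] int_mult[OF assms(2)] by (simp add: distrib_right)
qed

lemma QQ_diff:
  assumes "integrable lborel F" "integrable lborel G" "QQ F" "QQ G"
  shows "QQ (\<lambda>y. F y - G y)"
proof -
  have "(\<lambda>n. (LINT y|lborel. F y * \<psi> n y) - (LINT y|lborel. G y * \<psi> n y)) \<longlonglongrightarrow> 0 - 0"
    using assms(3,4) unfolding QQ_def by (intro tendsto_diff)
  then show ?thesis unfolding QQ_def
    using int_mult[OF assms(1)] int_mult[OF assms(2)] by (simp add: left_diff_distrib)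
qed

lemma QQ_cmult:
  assumes "QQ F"
  shows "QQ (\<lambda>y. F y * c)"
proof -
  have "(\<lambda>n. c * (LINT y|lborel. F y * \<psi> n y)) \<longlonglongrightarrow> c * 0"
    using assms unfolding QQ_def by (intro tendsto_mult_left)
  then show ?thesis unfolding QQ_def
    by (simp add: mult_ac)
qed

lemma QQ_zero: "QQ (\<lambda>y. 0)"
  unfolding QQ_def by simp

lemma QQ_box: "QQ (indicator {c..d})"
  unfolding QQ_def using psi_int[of c d] by simp

lemma int_ind_R:
  assumes "A \<in> sets borel"
  shows "integrable lborel (indicator (A \<inter> {-R..R}) :: real \<Rightarrow> real)"
proof -
  have "emeasure lborel (A \<inter> {-R..R}) \<le> emeasure lborel {-R..R}"
    by (rule emeasure_mono) auto
  also have "\<dots> < \<infinity>" by (simp add: emeasure_lborel_Icc_eq)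
  finally show ?thesis using assms by (simp add: integrable_indicator_iff)
qed

lemma QQ_trunc:
  assumes "A \<in> sets borel"
  shows "QQ (indicator (A \<inter> {-R..R}))"
proof -
  let ?G = "range (\<lambda>(a,b). {a..b::real})"
  have sb: "sets borel = sigma_sets UNIV ?G"
    by (subst borel_eq_atLeastAtMost) (simp add: sets_measure_of)
  have sig: "A \<in> sigma_sets UNIV ?G" using assms sb by simp
  have stab: "Int_stable ?G"
    unfolding Int_stable_def
  proof (intro ballI)
    fix X Y assume "X \<in> ?G" "Y \<in> ?G"
    then obtain a b c d where "X = {a..b}" "Y = {c..d}" by auto
    then have "X \<inter> Y = (\<lambda>(a,b). {a..b::real}) (max a c, min b d)" by simp
    then show "X \<inter> Y \<in> ?G" by (rule image_eqI) simp
  qed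
  have pow: "?G \<subseteq> Pow UNIV" by auto
  have I: "integrable lborel (indicator {-R..R} :: real \<Rightarrow> real)"
    using int_ind_R[of UNIV R] by simp
  from stab pow sig show ?thesis
  proof (induction rule: sigma_sets_induct_disjoint)
    case (basic A)
    then obtain a b where "A = {a..b}" by auto
    then have "A \<inter> {-R..R} = {max a (-R)..min b R}" by simp
    then show ?case using QQ_box by simp
  next
    case empty
    have "indicator ({} \<inter> {-R..R}) = (\<lambda>y::real. 0::real)" by (auto simp: indicator_def)
    then show ?case using QQ_zero by simp
  next
    case (compl A)
    then have Ab: "A \<in> sets borel" using sb by simp
    have "indicator ((UNIV - A) \<inter> {-R..R}) = (\<lambda>y::real. indicator {-R..R} y - indicator (A \<inter> {-R..R}) y :: real)"
      by (auto simp: indicator_def fun_eq_iff)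
    moreover have "QQ (\<lambda>y. indicator {-R..R} y - indicator (A \<inter> {-R..R}) y)"
      using QQ_diff[OF I int_ind_R[OF Ab] QQ_box compl(2)] by simp
    ultimately show ?case by simp
  next
    case (union A)
    have Ab: "\<And>i. A i \<in> sets borel" using union(2) sb by auto
    have UNb: "\<And>N. (\<Union>i<N. A i) \<in> sets borel" using Ab by auto
    have Ub: "(\<Union>i. A i) \<in> sets borel" using Ab by auto
    define G where "G N = (indicator ((\<Union>i<N. A i) \<inter> {-R..R}) :: real \<Rightarrow> real)" for N
    have Gint: "integrable lborel (G N)" for N unfolding G_def by (rule int_ind_R[OF UNb])
    have GQ: "QQ (G N)" for N
    proof (induction N)
      case 0
      have "G 0 = (\<lambda>y. 0)" by (auto simp: G_def indicator_def)
      then show ?case using QQ_zero by simp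
    next
      case (Suc N)
      have disj: "A N \<inter> (\<Union>i<N. A i) = {}"
      proof -
        have "A N \<inter> A i = {}" if "i < N" for i
          using union(1) that unfolding disjoint_family_on_def by simp
        then show ?thesis by blast
      qed
      have "G (Suc N) = (\<lambda>y. G N y + indicator (A N \<inter> {-R..R}) y)"
        using disj by (auto simp: G_def indicator_def fun_eq_iff lessThan_Suc)
      moreover have "QQ (\<lambda>y. G N y + indicator (A N \<inter> {-R..R}) y)"
        using QQ_add[OF Gint int_ind_R[OF Ab] Suc union(3)] by simp
      ultimately show ?case by simp
    qed
    show ?case
    proof (rule QQ_lim[OF int_ind_R[OF Ub] Gint GQ])
      show "(\<lambda>i. LINT y|lborel. \<bar>indicator ((\<Union>i. A i) \<inter> {-R..R}) y - G i y\<bar>) \<longlonglongrightarrow> 0"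
      proof (rule L1_dom[OF _ _ I])
        show "indicator ((\<Union>i. A i) \<inter> {-R..R}) \<in> borel_measurable borel"
          using Ub by (intro borel_measurable_indicator) auto
        show "G i \<in> borel_measurable borel" for i
          unfolding G_def using UNb by (intro borel_measurable_indicator) auto
        show "(\<lambda>i. G i y) \<longlonglongrightarrow> indicator ((\<Union>i. A i) \<inter> {-R..R}) y" for y
        proof (cases "y \<in> (\<Union>i. A i)")
          case True
          then obtain j where j: "y \<in> A j" by auto
          have "eventually (\<lambda>i. G i y = indicator ((\<Union>i. A i) \<inter> {-R..R}) y) sequentially"
            using eventually_gt_at_top[of j] by eventually_elim (use j in \<open>auto simp: G_def indicator_def\<close>)
          then show ?thesis by (rule tendsto_eventually)
        next
          case False
          then have "\<And>i. G i y = indicator ((\<Union>i. A i) \<inter> {-R..R}) y"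
            by (auto simp: G_def indicator_def)
          then show ?thesis by simp
        qed
        show "\<bar>indicator ((\<Union>i. A i) \<inter> {-R..R}) y - G i y\<bar> \<le> indicator {-R..R} y" for i y
          by (auto simp: G_def indicator_def)
      qed
    qed
  qed
qed

lemma QQ_ind:
  assumes Ab: "A \<in> sets borel" and fin: "emeasure lborel A < \<infinity>"
  shows "QQ (indicator A)"
proof -
  have Aint: "integrable lborel (indicator A :: real \<Rightarrow> real)"
    using assms by (simp add: integrable_indicator_iff)
  define G where "G m = (indicator (A \<inter> {-real m..real m}) :: real \<Rightarrow> real)" for m :: nat
  show ?thesis
  proof (rule QQ_lim[OF Aint])
    show "integrable lborel (G m)" for m unfolding G_def by (rule int_ind_R[OF Ab])
    show "QQ (G m)" for m unfolding G_def by (rule QQ_trunc[OF Ab])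
    show "(\<lambda>i. LINT y|lborel. \<bar>indicator A y - G i y\<bar>) \<longlonglongrightarrow> 0"
    proof (rule L1_dom[OF _ _ Aint])
      show "indicator A \<in> borel_measurable borel" using Ab by simp
      show "G i \<in> borel_measurable borel" for i
        unfolding G_def using Ab by (intro borel_measurable_indicator) auto
      show "(\<lambda>i. G i y) \<longlonglongrightarrow> indicator A y" for y
      proof -
        obtain j :: nat where j: "\<bar>y\<bar> \<le> real j" using real_arch_simple by blast
        have "eventually (\<lambda>i. G i y = indicator A y) sequentially"
          using eventually_ge_at_top[of j]
          by eventually_elim (use j in \<open>auto simp: G_def indicator_def\<close>)
        then show ?thesis by (rule tendsto_eventually)
      qed
      show "\<bar>indicator A y - G i y\<bar> \<le> indicator A y" for i y
        by (auto simp: G_def indicator_def)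
    qed
  qed
qed

lemma QQ_all:
  assumes "integrable lborel F"
  shows "QQ F"
  using assms
proof (induction rule: integrable_induct)
  case (base A c)
  then show ?case using QQ_cmult[OF QQ_ind, of A c] by simp
next
  case (add f g)
  then show ?case using QQ_add by simp
next
  case (lim f s)
  have fi: "integrable lborel f" and si: "\<And>i. integrable lborel (s i)" and sQ: "\<And>i. QQ (s i)"
    and sc: "\<And>y. (\<lambda>i. s i y) \<longlonglongrightarrow> f y" and sb: "\<And>i y. norm (s i y) \<le> 2 * norm (f y)"
    using lim by auto
  show ?case
  proof (rule QQ_lim[OF fi si sQ])
    show "(\<lambda>i. LINT y|lborel. \<bar>f y - s i y\<bar>) \<longlonglongrightarrow> 0"
    proof (rule L1_dom[where w="\<lambda>y. 3 * \<bar>f y\<bar>"])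
      show "f \<in> borel_measurable borel" using fi by (simp add: borel_measurable_integrable)
      show "s i \<in> borel_measurable borel" for i using si[of i] by (simp add: borel_measurable_integrable)
      show "integrable lborel (\<lambda>y. 3 * \<bar>f y\<bar>)" using fi by simp
      show "(\<lambda>i. s i y) \<longlonglongrightarrow> f y" for y using sc by simp
      show "\<bar>f y - s i y\<bar> \<le> 3 * \<bar>f y\<bar>" for i y using sb[of i y] by simp
    qed
  qed
qed

end

lemma t1:
  fixes b \<alpha> u :: real assumes "b > 0"
  shows "((\<lambda>u. 2 * arctan ((u - \<alpha>) / b)) has_real_derivative 2 * b / ((u - \<alpha>)\<^sup>2 + b\<^sup>2)) (at u)"
proof -
  have pos: "(u - \<alpha>)\<^sup>2 + b\<^sup>2 > 0" using assms by (simp add: add_nonneg_pos)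
  have "((\<lambda>u. 2 * arctan ((u - \<alpha>) / b)) has_real_derivative 2 * (inverse (1 + ((u - \<alpha>) / b)\<^sup>2) * (1 / b))) (at u)"
    using assms by (intro DERIV_cmult DERIV_chain2[OF DERIV_arctan]) (auto intro!: derivative_eq_intros)
  moreover have "2 * (inverse (1 + ((u - \<alpha>) / b)\<^sup>2) * (1 / b)) = 2 * b / ((u - \<alpha>)\<^sup>2 + b\<^sup>2)"
    using assms pos by (simp add: field_simps power2_eq_square)
  ultimately show ?thesis by simp
qed
lemma t2:
  fixes b \<alpha> u :: real assumes "b > 0"
  shows "((\<lambda>u. 2 * b / ((u - \<alpha>)\<^sup>2 + b\<^sup>2)) has_real_derivative - 4 * b * (u - \<alpha>) / ((u - \<alpha>)\<^sup>2 + b\<^sup>2)\<^sup>2) (at u)"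
proof -
  have pos: "(u - \<alpha>)\<^sup>2 + b\<^sup>2 > 0" using assms by (simp add: add_nonneg_pos)
  have d: "((\<lambda>u. (u - \<alpha>)\<^sup>2 + b\<^sup>2) has_real_derivative 2 * (u - \<alpha>)) (at u)"
    by (auto intro!: derivative_eq_intros)
  have "((\<lambda>u. 2 * b * inverse ((u - \<alpha>)\<^sup>2 + b\<^sup>2)) has_real_derivative 2 * b * (- (2 * (u - \<alpha>) * inverse (((u - \<alpha>)\<^sup>2 + b\<^sup>2) ^ Suc (Suc 0))))) (at u)"
  proof -
    have e: "((\<lambda>u. inverse ((u - \<alpha>)\<^sup>2 + b\<^sup>2)) has_real_derivative - (2 * (u - \<alpha>) * inverse (((u - \<alpha>)\<^sup>2 + b\<^sup>2) ^ Suc (Suc 0)))) (at u)"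
      by (rule DERIV_inverse_fun[OF d]) (use pos in auto)
    show ?thesis by (rule DERIV_cmult[OF e])
  qed
  moreover have "2 * b * (- (2 * (u - \<alpha>) * inverse (((u - \<alpha>)\<^sup>2 + b\<^sup>2) ^ Suc (Suc 0)))) = - 4 * b * (u - \<alpha>) / ((u - \<alpha>)\<^sup>2 + b\<^sup>2)\<^sup>2"
    by (simp add: divide_inverse eval_nat_numeral)
  ultimately have "((\<lambda>u. 2 * b * inverse ((u - \<alpha>)\<^sup>2 + b\<^sup>2)) has_real_derivative - 4 * b * (u - \<alpha>) / ((u - \<alpha>)\<^sup>2 + b\<^sup>2)\<^sup>2) (at u)"
    by (rule DERIV_cong)
  then show ?thesis by (simp add: divide_inverse)
qed

lemma ibp_bound:
  fixes g gp gq :: "real \<Rightarrow> real" and c d L B :: real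
  assumes cd: "c \<le> d"
    and dg: "\<And>y. (g has_real_derivative gp y) (at y)"
    and dgp: "\<And>y. (gp has_real_derivative gq y) (at y)"
    and cgq: "continuous_on {c..d} gq"
    and L: "L > 0" "\<And>y. y \<in> {c..d} \<Longrightarrow> L \<le> gp y"
    and B: "\<And>y. y \<in> {c..d} \<Longrightarrow> \<bar>gq y\<bar> \<le> B"
  shows "\<bar>integral {c..d} (\<lambda>y. sin (g y))\<bar> \<le> 2 / L + B / L\<^sup>2 * (d - c)"
proof -
  define F where "F y = - cos (g y) / gp y" for y
  define r where "r y = cos (g y) * gq y / (gp y)\<^sup>2" for y
  have gppos: "\<And>y. y \<in> {c..d} \<Longrightarrow> gp y > 0" using L by fastforce
  have derF: "(F has_vector_derivative (sin (g y) + r y)) (at y within {c..d})" if y: "y \<in> {c..d}" for y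
  proof -
    have "(F has_real_derivative (sin (g y) + r y)) (at y)"
      unfolding F_def[abs_def]
      apply (rule DERIV_cong[OF DERIV_divide[OF DERIV_minus[OF DERIV_chain2[OF DERIV_cos dg]] dgp]])
      using gppos[OF y] by (auto simp: r_def field_simps power2_eq_square)
    then show ?thesis
      by (simp add: has_real_derivative_iff_has_vector_derivative has_vector_derivative_at_within)
  qed
  have ftc: "((\<lambda>y. sin (g y) + r y) has_integral F d - F c) {c..d}"
    by (rule fundamental_theorem_of_calculus[OF cd derF])
  have contg: "continuous_on {c..d} g"
    using dg by (intro continuous_at_imp_continuous_on ballI DERIV_isCont) blast
  have contgp: "continuous_on {c..d} gp"
    using dgp by (intro continuous_at_imp_continuous_on ballI DERIV_isCont) blast
  have contr: "continuous_on {c..d} r"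
    unfolding r_def[abs_def]
    by (intro continuous_intros contg contgp cgq) (use gppos in force)
  have rint: "(r has_integral integral {c..d} r) {c..d}"
    using integrable_continuous_real[OF contr] by (rule integrable_integral)
  have "((\<lambda>y. sin (g y)) has_integral (F d - F c) - integral {c..d} r) {c..d}"
    using has_integral_diff[OF ftc rint] by simp
  then have eq: "integral {c..d} (\<lambda>y. sin (g y)) = (F d - F c) - integral {c..d} r"
    by (rule integral_unique)
  have Fb: "\<bar>F y\<bar> \<le> 1 / L" if y: "y \<in> {c..d}" for y
  proof -
    have "\<bar>F y\<bar> = \<bar>cos (g y)\<bar> / gp y" using gppos[OF y] by (simp add: F_def abs_divide)
    also have "\<dots> \<le> 1 / L"
      by (rule frac_le) (use gppos[OF y] L(1) L(2)[OF y] in auto)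
    finally show ?thesis .
  qed
  have B0: "0 \<le> B" using B[of c] cd by force
  have rb: "norm (r y) \<le> B / L\<^sup>2" if y: "y \<in> {c..d}" for y
  proof -
    have "norm (r y) = \<bar>cos (g y)\<bar> * \<bar>gq y\<bar> / (gp y)\<^sup>2" by (simp add: r_def abs_divide abs_mult)
    also have "\<dots> \<le> B / L\<^sup>2"
    proof (rule frac_le)
      show "0 \<le> B" by (rule B0)
      show "\<bar>cos (g y)\<bar> * \<bar>gq y\<bar> \<le> B"
        using B[OF y] by (metis abs_cos_le_one abs_ge_zero mult_le_one mult_left_le order_trans mult.commute)
      show "0 < L\<^sup>2" using L by simp
      show "L\<^sup>2 \<le> (gp y)\<^sup>2" using L(1) L(2)[OF y] by (intro power_mono) auto
    qed
    finally show ?thesis .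
  qed
  have ib: "norm (integral {c..d} r) \<le> B / L\<^sup>2 * Henstock_Kurzweil_Integration.content {c..d}"
    by (rule has_integral_bound_real[where S="{}", OF _ _ rint]) (use B0 rb in auto)
  have "\<bar>integral {c..d} (\<lambda>y. sin (g y))\<bar> \<le> \<bar>F d\<bar> + \<bar>F c\<bar> + \<bar>integral {c..d} r\<bar>"
    unfolding eq by linarith
  also have "\<dots> \<le> 1 / L + 1 / L + B / L\<^sup>2 * (d - c)"
    using Fb[of d] Fb[of c] ib cd by auto
  finally show ?thesis by simp
qed


definition Gf :: "(nat \<Rightarrow> complex) \<Rightarrow> nat \<Rightarrow> real \<Rightarrow> real" where
  "Gf a n u = (\<Sum>k<n. 2 * arctan ((u - Re (a k)) / Im (a k)))"
definition ff :: "(nat \<Rightarrow> complex) \<Rightarrow> nat \<Rightarrow> real \<Rightarrow> real" where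
  "ff a n u = (\<Sum>k<n. 2 * Im (a k) / ((u - Re (a k))\<^sup>2 + (Im (a k))\<^sup>2))"
definition f1 :: "(nat \<Rightarrow> complex) \<Rightarrow> nat \<Rightarrow> real \<Rightarrow> real" where
  "f1 a n u = (\<Sum>k<n. - 4 * Im (a k) * (u - Re (a k)) / ((u - Re (a k))\<^sup>2 + (Im (a k))\<^sup>2)\<^sup>2)"

lemma Gf_deriv:
  assumes "\<And>k. Im (a k) > 0"
  shows "(Gf a n has_real_derivative ff a n u) (at u)"
  unfolding Gf_def[abs_def] ff_def
  by (rule DERIV_sum) (rule t1[OF assms])

lemma ff_deriv:
  assumes "\<And>k. Im (a k) > 0"
  shows "(ff a n has_real_derivative f1 a n u) (at u)"
  unfolding ff_def[abs_def] f1_def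
  by (rule DERIV_sum) (rule t2[OF assms])

lemma f1_cont:
  assumes "\<And>k. Im (a k) > 0"
  shows "continuous_on S (f1 a n)"
proof -
  have "((u - Re (a k))\<^sup>2 + (Im (a k))\<^sup>2)\<^sup>2 \<noteq> 0" for u k
    using assms[of k] by (simp add: add_nonneg_pos)
  then show ?thesis unfolding f1_def[abs_def]
    by (intro continuous_intros) auto
qed

lemma aux_ineq:
  fixes P U A B N :: real
  assumes "P \<le> 2 * U + 2 * A" "0 \<le> (A + B) * N" "U \<le> N" "0 \<le> B" "0 \<le> A"
  shows "(P + B) / 2 \<le> (1 + (A + B)) * (N + 1)"
proof -
  have e: "(1 + (A + B)) * (N + 1) = 1 + A + B + N + (A + B) * N" by (simp add: algebra_simps)
  have f: "(P + B) / 2 = P / 2 + B / 2" by simp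
  show ?thesis unfolding e f using assms by linarith
qed

lemma ff_lower:
  assumes pos: "\<And>k. Im (a k) > 0" and u: "\<bar>u\<bar> \<le> M"
  shows "sigma_seq a n / (M\<^sup>2 + 1) \<le> ff a n u"
proof -
  have "sigma_seq a n / (M\<^sup>2 + 1) = (\<Sum>k<n. \<bar>Im (a k)\<bar> / (1 + (cmod (a k))\<^sup>2) / (M\<^sup>2 + 1))"
    unfolding sigma_seq_def by (simp add: sum_divide_distrib)
  also have "\<dots> \<le> ff a n u"
    unfolding ff_def
  proof (rule sum_mono)
    fix k
    define b where "b = Im (a k)"
    define \<alpha> where "\<alpha> = Re (a k)"
    have b: "b > 0" using pos[of k] by (simp add: b_def)
    define D where "D = (u - \<alpha>)\<^sup>2 + b\<^sup>2"
    have Dpos: "D > 0" using b by (simp add: D_def add_nonneg_pos)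
    have q: "(cmod (a k))\<^sup>2 = \<alpha>\<^sup>2 + b\<^sup>2" by (simp add: cmod_power2 \<alpha>_def b_def)
    have "\<bar>u\<bar>\<^sup>2 \<le> M\<^sup>2" by (rule power_mono[OF u]) simp
    then have u2: "u\<^sup>2 \<le> M\<^sup>2" by simp
    have h1: "(u - \<alpha>)\<^sup>2 \<le> 2 * u\<^sup>2 + 2 * \<alpha>\<^sup>2"
    proof -
      have "0 \<le> (u + \<alpha>)\<^sup>2" by simp
      then show ?thesis by (simp add: power2_diff power2_sum)
    qed
    have h2: "0 \<le> (\<alpha>\<^sup>2 + b\<^sup>2) * M\<^sup>2" by simp
    have h3: "2 * ((1 + (\<alpha>\<^sup>2 + b\<^sup>2)) * (M\<^sup>2 + 1)) = 2 + 2 * (\<alpha>\<^sup>2 + b\<^sup>2) + 2 * M\<^sup>2 + 2 * ((\<alpha>\<^sup>2 + b\<^sup>2) * M\<^sup>2)"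
      by (simp add: algebra_simps)
    have DD: "D / 2 \<le> (1 + (cmod (a k))\<^sup>2) * (M\<^sup>2 + 1)"
      unfolding q D_def by (rule aux_ineq[OF h1 h2 u2]) simp_all
    have "\<bar>Im (a k)\<bar> / (1 + (cmod (a k))\<^sup>2) / (M\<^sup>2 + 1) = b / ((1 + (cmod (a k))\<^sup>2) * (M\<^sup>2 + 1))"
      using b by (simp add: b_def)
    also have "\<dots> \<le> b / (D / 2)"
      by (rule frac_le) (use b Dpos DD in auto)
    also have "\<dots> = 2 * Im (a k) / ((u - Re (a k))\<^sup>2 + (Im (a k))\<^sup>2)"
      by (simp add: D_def b_def \<alpha>_def)
    finally show "\<bar>Im (a k)\<bar> / (1 + (cmod (a k))\<^sup>2) / (M\<^sup>2 + 1) \<le> 2 * Im (a k) / ((u - Re (a k))\<^sup>2 + (Im (a k))\<^sup>2)" .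
  qed
  finally show ?thesis .
qed

lemma f1_upper:
  assumes pos: "\<And>k. Im (a k) > 0"
  shows "\<bar>f1 a n u\<bar> \<le> 2 * varsigma_seq a n"
proof -
  have "\<bar>f1 a n u\<bar> \<le> (\<Sum>k<n. \<bar>- 4 * Im (a k) * (u - Re (a k)) / ((u - Re (a k))\<^sup>2 + (Im (a k))\<^sup>2)\<^sup>2\<bar>)"
    unfolding f1_def by (rule sum_abs)
  also have "\<dots> \<le> (\<Sum>k<n. 2 * (1 / (Im (a k))\<^sup>2))"
  proof (rule sum_mono)
    fix k
    define b where "b = Im (a k)"
    define t where "t = u - Re (a k)"
    have b: "b > 0" using pos[of k] by (simp add: b_def)
    define D where "D = t\<^sup>2 + b\<^sup>2"
    have Dpos: "D > 0" using b by (simp add: D_def add_nonneg_pos)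
    have hb: "b\<^sup>2 \<le> D" by (simp add: D_def)
    have h1: "4 * b * \<bar>t\<bar> \<le> 2 * D"
    proof -
      have "0 \<le> (b - \<bar>t\<bar>)\<^sup>2" by simp
      then show ?thesis by (simp add: D_def power2_diff power2_abs)
    qed
    have "\<bar>- 4 * b * t / D\<^sup>2\<bar> = 4 * b * \<bar>t\<bar> / D\<^sup>2"
      using b by (simp add: abs_divide abs_mult)
    also have "\<dots> \<le> 2 * D / D\<^sup>2"
      by (rule divide_right_mono[OF h1]) simp
    also have "\<dots> = 2 / D" using Dpos by (simp add: power2_eq_square)
    also have "\<dots> \<le> 2 / b\<^sup>2"
      by (rule divide_left_mono[OF hb]) (use b Dpos in auto)
    finally show "\<bar>- 4 * Im (a k) * (u - Re (a k)) / ((u - Re (a k))\<^sup>2 + (Im (a k))\<^sup>2)\<^sup>2\<bar> \<le> 2 * (1 / (Im (a k))\<^sup>2)"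
      by (simp add: b_def t_def D_def)
  qed
  also have "\<dots> = 2 * varsigma_seq a n"
    unfolding varsigma_seq_def by (simp add: sum_distrib_left)
  finally show ?thesis .
qed


lemma g_deriv:
  assumes pos: "\<And>k. Im (a k) > 0" and s: "s = 1 \<or> s = -1"
  shows "((\<lambda>y. s * (Gf a n (x + s * y) - Gf a n x)) has_real_derivative ff a n (x + s * y)) (at y)"
proof -
  have h: "((\<lambda>y. Gf a n (x + s * y)) has_real_derivative ff a n (x + s * y) * s) (at y)"
    by (rule DERIV_chain2[OF Gf_deriv[OF pos]]) (auto intro!: derivative_eq_intros)
  have "((\<lambda>y. s * (Gf a n (x + s * y) - Gf a n x)) has_real_derivative s * (ff a n (x + s * y) * s - 0)) (at y)"
    by (intro DERIV_cmult DERIV_diff h DERIV_const)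
  then show ?thesis by (rule DERIV_cong) (use s in auto)
qed

lemma g1_deriv:
  assumes pos: "\<And>k. Im (a k) > 0"
  shows "((\<lambda>y. ff a n (x + s * y)) has_real_derivative f1 a n (x + s * y) * s) (at y)"
  by (rule DERIV_chain2[OF ff_deriv[OF pos]]) (auto intro!: derivative_eq_intros)

lemma osc_int_tendsto:
  fixes a :: "nat \<Rightarrow> complex" and s x c d C :: real
  assumes pos: "\<And>k. Im (a k) > 0"
    and sigma_inf: "filterlim (sigma_seq a) at_top sequentially"
    and ratio: "\<And>n. n \<ge> 1 \<Longrightarrow> varsigma_seq a n / sigma_seq a n \<le> C"
    and s: "s = 1 \<or> s = -1"
  shows "(\<lambda>n. integral {c..d} (\<lambda>y. sin (s * (Gf a n (x + s * y) - Gf a n x)))) \<longlonglongrightarrow> 0"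
proof (cases "c \<le> d")
  case False then show ?thesis by simp
next
  case cd: True
  define M where "M = \<bar>x\<bar> + \<bar>c\<bar> + \<bar>d\<bar>"
  define K where "K = 2 * (M\<^sup>2 + 1) + 2 * (M\<^sup>2 + 1)\<^sup>2 * (d - c) * C"
  have ev: "eventually (\<lambda>n. norm (integral {c..d} (\<lambda>y. sin (s * (Gf a n (x + s * y) - Gf a n x))))
              \<le> K / sigma_seq a n) sequentially"
  proof -
    have "eventually (\<lambda>n. 0 < sigma_seq a n) sequentially"
      using sigma_inf unfolding filterlim_at_top_dense by blast
    moreover have "eventually (\<lambda>n. n \<ge> 1) sequentially" by (rule eventually_ge_at_top)
    ultimately show ?thesis
    proof eventually_elim
      case (elim n)
      define \<sigma> where "\<sigma> = sigma_seq a n"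
      define \<tau> where "\<tau> = varsigma_seq a n"
      have sp: "\<sigma> > 0" using elim by (simp add: \<sigma>_def)
      have rat: "\<tau> / \<sigma> \<le> C" using ratio[of n] elim by (simp add: \<sigma>_def \<tau>_def)
      define L where "L = \<sigma> / (M\<^sup>2 + 1)"
      have Lpos: "L > 0" using sp by (simp add: L_def add_nonneg_pos)
      have bnd: "\<bar>integral {c..d} (\<lambda>y. sin (s * (Gf a n (x + s * y) - Gf a n x)))\<bar>
                 \<le> 2 / L + (2 * \<tau>) / L\<^sup>2 * (d - c)"
      proof (rule ibp_bound[where gp="\<lambda>y. ff a n (x + s * y)" and gq="\<lambda>y. f1 a n (x + s * y) * s", OF cd])
        show "((\<lambda>y. s * (Gf a n (x + s * y) - Gf a n x)) has_real_derivative ff a n (x + s * y)) (at y)" for y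
          by (rule g_deriv[OF pos s])
        show "((\<lambda>y. ff a n (x + s * y)) has_real_derivative f1 a n (x + s * y) * s) (at y)" for y
          by (rule g1_deriv[OF pos])
        have ne: "((t)\<^sup>2 + (Im (a k))\<^sup>2)\<^sup>2 \<noteq> 0" for t k
          using pos[of k] by (simp add: add_nonneg_pos)
        show "continuous_on {c..d} (\<lambda>y. f1 a n (x + s * y) * s)"
          unfolding f1_def by (intro continuous_intros) (use ne in auto)
        show "0 < L" by (rule Lpos)
        show "L \<le> ff a n (x + s * y)" if y: "y \<in> {c..d}" for y
        proof -
          have "\<bar>y\<bar> \<le> \<bar>c\<bar> + \<bar>d\<bar>" using y by auto
          moreover have "\<bar>x + s * y\<bar> \<le> \<bar>x\<bar> + \<bar>y\<bar>"
            using s abs_triangle_ineq[of x y] abs_triangle_ineq4[of x y] by auto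
          ultimately have "\<bar>x + s * y\<bar> \<le> M" by (simp add: M_def)
          from ff_lower[where a=a and n=n, OF pos this] show ?thesis by (simp add: L_def \<sigma>_def)
        qed
        show "\<bar>f1 a n (x + s * y) * s\<bar> \<le> 2 * \<tau>" for y
          using f1_upper[where a=a and n=n and u="x + s * y", OF pos] s by (auto simp: \<tau>_def)
      qed
      have e1: "2 / L = 2 * (M\<^sup>2 + 1) / \<sigma>" by (simp add: L_def)
      have e2: "(2 * \<tau>) / L\<^sup>2 * (d - c) = (2 * (M\<^sup>2 + 1)\<^sup>2 * (d - c)) * ((\<tau> / \<sigma>) / \<sigma>)"
        using sp by (simp add: L_def field_simps power2_eq_square)
      have "(\<tau> / \<sigma>) / \<sigma> \<le> C / \<sigma>" by (rule divide_right_mono[OF rat]) (use sp in simp)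
      then have e3: "(2 * (M\<^sup>2 + 1)\<^sup>2 * (d - c)) * ((\<tau> / \<sigma>) / \<sigma>) \<le> (2 * (M\<^sup>2 + 1)\<^sup>2 * (d - c)) * (C / \<sigma>)"
        by (rule mult_left_mono) (use cd in simp)
      have e4: "K / \<sigma> = 2 * (M\<^sup>2 + 1) / \<sigma> + (2 * (M\<^sup>2 + 1)\<^sup>2 * (d - c)) * (C / \<sigma>)"
        by (simp add: K_def add_divide_distrib)
      show ?case using bnd e1 e2 e3 e4 by (simp add: \<sigma>_def)
    qed
  qed
  have "(\<lambda>n. K / sigma_seq a n) \<longlonglongrightarrow> 0"
    by (rule tendsto_divide_0[OF tendsto_const filterlim_at_top_imp_at_infinity[OF sigma_inf]])
  then show ?thesis by (rule Lim_null_comparison[OF ev])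
qed

lemma mu_eq:
  assumes pos: "\<And>k. Im (a k) > 0"
  shows "mu_seq a n t x = (1 / t) * (Gf a n (x + t) - Gf a n x)"
proof -
  have fe: "(\<lambda>u. \<Sum>k<n. 2 * Im (a k) / ((u - Re (a k))\<^sup>2 + (Im (a k))\<^sup>2)) = ff a n"
    by (simp add: ff_def fun_eq_iff)
  have "(LBINT u=x..x+t. ff a n u) = Gf a n (x + t) - Gf a n x"
  proof (rule interval_integral_FTC_finite)
    show "continuous_on {min x (x + t)..max x (x + t)} (ff a n)"
      by (intro continuous_at_imp_continuous_on ballI DERIV_isCont[OF ff_deriv[of a, OF pos]])
    show "(Gf a n has_vector_derivative ff a n u) (at u within {min x (x + t)..max x (x + t)})" for u
      using Gf_deriv[of a, OF pos]
      by (simp add: has_real_derivative_iff_has_vector_derivative has_vector_derivative_at_within)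
  qed
  then show ?thesis unfolding mu_seq_def fe by simp
qed

theorem lemma7:
  fixes a :: "nat \<Rightarrow> complex" and C :: real
    and \<phi> :: "real \<Rightarrow> real" and x :: real
  assumes Im_pos: "\<And>k. Im (a k) > 0"
    and no_lim: "no_real_limit_points a"
    and sigma_inf: "filterlim (sigma_seq a) at_top sequentially"
    and ratio: "\<And>n. n \<ge> 1 \<Longrightarrow> varsigma_seq a n / sigma_seq a n \<le> C"
    and phi_L1: "set_integrable lborel {0<..} \<phi>"
  shows "((\<lambda>n. LBINT y:{0<..}. \<phi> y * sin (y * mu_seq a n y x)) \<longlonglongrightarrow> 0) \<and>
        ((\<lambda>n. LBINT y:{0<..}. \<phi> y * sin (y * mu_seq a n (- y) x)) \<longlonglongrightarrow> 0)"
proof -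
  have key: "(\<lambda>n. LBINT y:{0<..}. \<phi> y * sin (y * mu_seq a n (s * y) x)) \<longlonglongrightarrow> 0"
    if s: "s = 1 \<or> s = -1" for s :: real
  proof -
    define \<psi> where "\<psi> n y = sin (s * (Gf a n (x + s * y) - Gf a n x))" for n :: nat and y :: real
    define F where "F y = indicator {0<..} y * \<phi> y" for y :: real
    have Fint: "integrable lborel F"
      using phi_L1 by (simp add: set_integrable_def F_def[abs_def])
    have cont: "continuous_on S (\<psi> n)" for n S
      unfolding \<psi>_def
      by (intro continuous_at_imp_continuous_on ballI continuous_intros DERIV_isCont[OF g_deriv[OF Im_pos s]])
    have meas: "\<psi> n \<in> borel_measurable borel" for n
      by (rule borel_measurable_continuous_onI[OF cont])
    have bnd: "\<bar>\<psi> n y\<bar> \<le> 1" for n y by (simp add: \<psi>_def)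
    have int: "(\<lambda>n. LINT y|lborel. indicator {c..d} y * \<psi> n y) \<longlonglongrightarrow> 0" for c d
    proof -
      have "(LINT y|lborel. indicator {c..d} y * \<psi> n y) = integral {c..d} (\<psi> n)" for n
      proof -
        have "(LINT y|lborel. indicator {c..d} y * \<psi> n y) = (LINT y:{c..d}|lborel. \<psi> n y)"
          by (simp add: set_lebesgue_integral_def)
        also have "\<dots> = integral {c..d} (\<psi> n)"
          by (rule set_borel_integral_eq_integral(2)[OF borel_integrable_atLeastAtMost'[OF cont]])
        finally show ?thesis .
      qed
      then show ?thesis
        using osc_int_tendsto[OF Im_pos sigma_inf ratio s, of c d x] by (simp add: \<psi>_def[abs_def])
    qed
    have "QQ \<psi> F" by (rule QQ_all[OF meas bnd int Fint])
    then have lim: "(\<lambda>n. LINT y|lborel. F y * \<psi> n y) \<longlonglongrightarrow> 0" by (simp add: QQ_def[OF meas bnd int])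
    have eq: "(LBINT y:{0<..}. \<phi> y * sin (y * mu_seq a n (s * y) x)) = (LINT y|lborel. F y * \<psi> n y)" for n
      unfolding set_lebesgue_integral_def
    proof (rule Bochner_Integration.integral_cong[OF refl])
      fix y :: real
      show "indicator {0<..} y *\<^sub>R (\<phi> y * sin (y * mu_seq a n (s * y) x)) = F y * \<psi> n y"
      proof (cases "y > 0")
        case True
        have "y * mu_seq a n (s * y) x = s * (Gf a n (x + s * y) - Gf a n x)"
          using mu_eq[where a=a and n=n and t="s * y" and x=x, OF Im_pos] s True by auto
        then show ?thesis by (simp add: F_def \<psi>_def True)
      next
        case False then show ?thesis by (simp add: F_def)
      qed
    qed
    show ?thesis using lim eq by simp
  qed
  show ?thesis using key[of 1] key[of "-1"] by simp
qed

end
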